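(* Let $\mathcal W,\mathcal U,\mathcal V$ be finite, $\Phi_W$ a pmf, $\Phi_{U|W}$ a codebook distribution and $\Phi_{V|W,U}$ a channel. Consider the $n$-fold memoryless setting: source $W^n\sim\prod\Phi_W$, random codebook $\{U^n(w^n)\}_{w^n\in\mathcal W^n}$ with independent entries $U^n(w^n)\sim\prod_t\Phi_{U|W}(\cdot|w_t)$, induced output $P_{V^n}(v^n)=\sum_{w^n}\prod_t\Phi_W(w_t)\Phi_{V|W,U}(v_t|w_t,U_t(w^n))$, and $Q_{V^n}=\prod\Phi_V$. If $H_\Phi(W)>I_\Phi(W,U;V)$, then $\mathbf E\|P_{V^n}-Q_{V^n}\|_{TV}\le\frac32\,2^{-\gamma n}$ for all $n$, where $\gamma>0$ is $$\gamma=\max_{\beta,\beta'\ge0,(\beta,\beta')\ne(0,0)}\ \frac{-\beta'}{2\beta+\beta'}\log\mathbf E_\Phi Z^\beta+\frac{-\beta}{2\beta+\beta'}\log\Big(\mathbf E_{\Phi_V}\sqrt{\mathbf E_{\Phi_{W,U|V}}Z^{1-\beta'}}\Big)^2,\qquad Z=\Phi_W(W)\frac{\Phi_{V|W,U}(V|W,U)}{\Phi_V(V)}.$$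
   Context: Expectations $\mathbf E_\Phi$ are under the single-letter joint $\Phi_W\Phi_{U|W}\Phi_{V|W,U}$; the inner expectation in $\mathbf E_{\Phi_V}\sqrt{\mathbf E_{\Phi_{W,U|V}}(\cdot)}$ is over $(W,U)$ given $V$. All logarithms base 2. Expectation on the left is over the random codebook; total variation is half the $\ell_1$ distance. *)

theory Defs
  imports Complex_Main "HOL-Library.FuncSet"
begin

definition is_pmf :: "('a::finite \<Rightarrow> real) \<Rightarrow> bool" where
  "is_pmf p \<longleftrightarrow> (\<forall>x. 0 \<le> p x) \<and> (\<Sum>x\<in>UNIV. p x) = 1"

definition joint :: "('w \<Rightarrow> real) \<Rightarrow> ('w \<Rightarrow> 'u \<Rightarrow> real) \<Rightarrow> ('w \<Rightarrow> 'u \<Rightarrow> 'v \<Rightarrow> real)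
    \<Rightarrow> 'w \<Rightarrow> 'u \<Rightarrow> 'v \<Rightarrow> real" where
  "joint PW PUW PV w u v = PW w * PUW w u * PV w u v"

definition PhiV :: "('w::finite \<Rightarrow> real) \<Rightarrow> ('w \<Rightarrow> 'u::finite \<Rightarrow> real) \<Rightarrow> ('w \<Rightarrow> 'u \<Rightarrow> 'v \<Rightarrow> real)
    \<Rightarrow> 'v \<Rightarrow> real" where
  "PhiV PW PUW PV v = (\<Sum>w\<in>UNIV. \<Sum>u\<in>UNIV. joint PW PUW PV w u v)"

text \<open>Entropy H(W) in bits (convention 0 log 0 = 0 holds since log 2 0 = 0).\<close>
definition entropyW :: "('w::finite \<Rightarrow> real) \<Rightarrow> real" where
  "entropyW PW = - (\<Sum>w\<in>UNIV. PW w * log 2 (PW w))"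

definition mutinfo :: "('w::finite \<Rightarrow> real) \<Rightarrow> ('w \<Rightarrow> 'u::finite \<Rightarrow> real)
    \<Rightarrow> ('w \<Rightarrow> 'u \<Rightarrow> 'v::finite \<Rightarrow> real) \<Rightarrow> real" where
  "mutinfo PW PUW PV = (\<Sum>w\<in>UNIV. \<Sum>u\<in>UNIV. \<Sum>v\<in>UNIV.
      joint PW PUW PV w u v * log 2 (PV w u v / PhiV PW PUW PV v))"

definition Zfun :: "('w::finite \<Rightarrow> real) \<Rightarrow> ('w \<Rightarrow> 'u::finite \<Rightarrow> real)
    \<Rightarrow> ('w \<Rightarrow> 'u \<Rightarrow> 'v \<Rightarrow> real) \<Rightarrow> 'w \<Rightarrow> 'u \<Rightarrow> 'v \<Rightarrow> real" where
  "Zfun PW PUW PV w u v = PW w * PV w u v / PhiV PW PUW PV v"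

definition EZpow :: "('w::finite \<Rightarrow> real) \<Rightarrow> ('w \<Rightarrow> 'u::finite \<Rightarrow> real)
    \<Rightarrow> ('w \<Rightarrow> 'u \<Rightarrow> 'v::finite \<Rightarrow> real) \<Rightarrow> real \<Rightarrow> real" where
  "EZpow PW PUW PV b = (\<Sum>w\<in>UNIV. \<Sum>u\<in>UNIV. \<Sum>v\<in>UNIV.
      joint PW PUW PV w u v * Zfun PW PUW PV w u v powr b)"

definition ESqrtCond :: "('w::finite \<Rightarrow> real) \<Rightarrow> ('w \<Rightarrow> 'u::finite \<Rightarrow> real)
    \<Rightarrow> ('w \<Rightarrow> 'u \<Rightarrow> 'v::finite \<Rightarrow> real) \<Rightarrow> real \<Rightarrow> real" where
  "ESqrtCond PW PUW PV c = (\<Sum>v\<in>UNIV. PhiV PW PUW PV v *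
      sqrt (\<Sum>w\<in>UNIV. \<Sum>u\<in>UNIV. (joint PW PUW PV w u v / PhiV PW PUW PV v)
              * Zfun PW PUW PV w u v powr c))"

definition gamma_obj :: "('w::finite \<Rightarrow> real) \<Rightarrow> ('w \<Rightarrow> 'u::finite \<Rightarrow> real)
    \<Rightarrow> ('w \<Rightarrow> 'u \<Rightarrow> 'v::finite \<Rightarrow> real) \<Rightarrow> real \<Rightarrow> real \<Rightarrow> real" where
  "gamma_obj PW PUW PV b b' =
     (- b' / (2 * b + b')) * log 2 (EZpow PW PUW PV b)
   + (- b / (2 * b + b')) * log 2 ((ESqrtCond PW PUW PV (1 - b'))\<^sup>2)"

definition gamma :: "('w::finite \<Rightarrow> real) \<Rightarrow> ('w \<Rightarrow> 'u::finite \<Rightarrow> real)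
    \<Rightarrow> ('w \<Rightarrow> 'u \<Rightarrow> 'v::finite \<Rightarrow> real) \<Rightarrow> real" where
  "gamma PW PUW PV = Sup {gamma_obj PW PUW PV b b' | b b'.
       0 \<le> b \<and> 0 \<le> b' \<and> (b, b') \<noteq> (0, 0)}"

text \<open>Length-n sequences over a type: functions on {..<n}, undefined outside.\<close>
definition seqs :: "nat \<Rightarrow> (nat \<Rightarrow> 'a) set" where
  "seqs n = PiE {..<n} (\<lambda>_. UNIV)"

definition codebooks :: "nat \<Rightarrow> ((nat \<Rightarrow> 'w) \<Rightarrow> (nat \<Rightarrow> 'u)) set" where
  "codebooks n = PiE (seqs n) (\<lambda>_. seqs n)"

definition codebook_prob :: "('w \<Rightarrow> 'u \<Rightarrow> real) \<Rightarrow> nat \<Rightarrow> ((nat \<Rightarrow> 'w) \<Rightarrow> (nat \<Rightarrow> 'u)) \<Rightarrow> real" where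
  "codebook_prob PUW n C = (\<Prod>w\<in>seqs n. \<Prod>t<n. PUW (w t) (C w t))"

definition P_out :: "('w \<Rightarrow> real) \<Rightarrow> ('w \<Rightarrow> 'u \<Rightarrow> 'v \<Rightarrow> real) \<Rightarrow> nat
    \<Rightarrow> ((nat \<Rightarrow> 'w) \<Rightarrow> (nat \<Rightarrow> 'u)) \<Rightarrow> (nat \<Rightarrow> 'v) \<Rightarrow> real" where
  "P_out PW PV n C vs = (\<Sum>w\<in>seqs n. \<Prod>t<n. PW (w t) * PV (w t) (C w t) (vs t))"

definition Q_out :: "('w::finite \<Rightarrow> real) \<Rightarrow> ('w \<Rightarrow> 'u::finite \<Rightarrow> real)
    \<Rightarrow> ('w \<Rightarrow> 'u \<Rightarrow> 'v \<Rightarrow> real) \<Rightarrow> nat \<Rightarrow> (nat \<Rightarrow> 'v) \<Rightarrow> real" where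
  "Q_out PW PUW PV n vs = (\<Prod>t<n. PhiV PW PUW PV (vs t))"

definition tv_dist :: "nat \<Rightarrow> ((nat \<Rightarrow> 'v) \<Rightarrow> real) \<Rightarrow> ((nat \<Rightarrow> 'v) \<Rightarrow> real) \<Rightarrow> real" where
  "tv_dist n P Q = (1/2) * (\<Sum>vs\<in>seqs n. \<bar>P vs - Q vs\<bar>)"

definition expected_tv :: "('w::finite \<Rightarrow> real) \<Rightarrow> ('w \<Rightarrow> 'u::finite \<Rightarrow> real)
    \<Rightarrow> ('w \<Rightarrow> 'u \<Rightarrow> 'v::finite \<Rightarrow> real) \<Rightarrow> nat \<Rightarrow> real" where
  "expected_tv PW PUW PV n = (\<Sum>C\<in>codebooks n. codebook_prob PUW n C *
       tv_dist n (P_out PW PV n C) (Q_out PW PUW PV n))"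

end

theory Submission
  imports Defs
begin


lemma finite_seqs[simp]: "finite (seqs n :: (nat \<Rightarrow> 'a::finite) set)"
  unfolding seqs_def by (intro finite_PiE) auto

lemma seqs_prod_sum:
  fixes f :: "nat \<Rightarrow> 'a::finite \<Rightarrow> real"
  shows "(\<Sum>x\<in>seqs n. \<Prod>t<n. f t (x t)) = (\<Prod>t<n. \<Sum>a\<in>UNIV. f t a)"
  unfolding seqs_def by (subst prod_sum_PiE) auto

lemma PiE_prod_sum:
  fixes g :: "'i \<Rightarrow> 'b \<Rightarrow> real"
  assumes "finite I" "\<And>i. i \<in> I \<Longrightarrow> finite (B i)"
  shows "(\<Sum>C\<in>PiE I B. \<Prod>i\<in>I. g i (C i)) = (\<Prod>i\<in>I. \<Sum>b\<in>B i. g i b)"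
  by (subst prod_sum_PiE) (use assms in auto)

lemma PiE_total:
  fixes p :: "'i \<Rightarrow> 'b \<Rightarrow> real"
  assumes "finite I" "\<And>i. i \<in> I \<Longrightarrow> finite (B i)" "\<And>i. i \<in> I \<Longrightarrow> (\<Sum>b\<in>B i. p i b) = 1"
  shows "(\<Sum>C\<in>PiE I B. \<Prod>i\<in>I. p i (C i)) = 1"
  using PiE_prod_sum[of I B p] assms by simp

lemma PiE_expect1:
  fixes p :: "'i \<Rightarrow> 'b \<Rightarrow> real"
  assumes "finite I" "\<And>i. i \<in> I \<Longrightarrow> finite (B i)" "\<And>i. i \<in> I \<Longrightarrow> (\<Sum>b\<in>B i. p i b) = 1"
    and "j \<in> I"
  shows "(\<Sum>C\<in>PiE I B. (\<Prod>i\<in>I. p i (C i)) * f (C j)) = (\<Sum>b\<in>B j. p j b * f b)"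
proof -
  define g where "g i b = (if i = j then p i b * f b else p i b)" for i b
  have "(\<Prod>i\<in>I. p i (C i)) * f (C j) = (\<Prod>i\<in>I. g i (C i))" for C
  proof -
    have "(\<Prod>i\<in>I. g i (C i)) = g j (C j) * (\<Prod>i\<in>I-{j}. g i (C i))"
      using assms by (simp add: prod.remove)
    also have "(\<Prod>i\<in>I-{j}. g i (C i)) = (\<Prod>i\<in>I-{j}. p i (C i))"
      by (intro prod.cong) (auto simp: g_def)
    also have "(\<Prod>i\<in>I. p i (C i)) = p j (C j) * (\<Prod>i\<in>I-{j}. p i (C i))"
      using assms by (simp add: prod.remove)
    ultimately show ?thesis by (simp add: g_def)
  qed
  then have "(\<Sum>C\<in>PiE I B. (\<Prod>i\<in>I. p i (C i)) * f (C j)) = (\<Prod>i\<in>I. \<Sum>b\<in>B i. g i b)"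
    using PiE_prod_sum[of I B g] assms by simp
  also have "\<dots> = (\<Sum>b\<in>B j. g j b) * (\<Prod>i\<in>I-{j}. \<Sum>b\<in>B i. g i b)"
    using assms by (simp add: prod.remove)
  also have "(\<Prod>i\<in>I-{j}. \<Sum>b\<in>B i. g i b) = 1"
    using assms(3) by (intro prod.neutral) (auto simp: g_def)
  finally show ?thesis by (simp add: g_def)
qed

lemma PiE_expect2:
  fixes p :: "'i \<Rightarrow> 'b \<Rightarrow> real"
  assumes "finite I" "\<And>i. i \<in> I \<Longrightarrow> finite (B i)" "\<And>i. i \<in> I \<Longrightarrow> (\<Sum>b\<in>B i. p i b) = 1"
    and "j \<in> I" "k \<in> I" "j \<noteq> k"
  shows "(\<Sum>C\<in>PiE I B. (\<Prod>i\<in>I. p i (C i)) * (f (C j) * h (C k))) =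
     (\<Sum>b\<in>B j. p j b * f b) * (\<Sum>b\<in>B k. p k b * h b)"
proof -
  define g where "g i b = (if i = j then p i b * f b else if i = k then p i b * h b else p i b)" for i b
  have r: "(\<Prod>i\<in>I. F i) = F j * (F k * (\<Prod>i\<in>I-{j}-{k}. F i))" for F :: "'i \<Rightarrow> real"
    using assms by (simp add: prod.remove[of _ j] prod.remove[of _ k])
  have "(\<Prod>i\<in>I. p i (C i)) * (f (C j) * h (C k)) = (\<Prod>i\<in>I. g i (C i))" for C
  proof -
    have "(\<Prod>i\<in>I-{j}-{k}. g i (C i)) = (\<Prod>i\<in>I-{j}-{k}. p i (C i))"
      by (intro prod.cong) (auto simp: g_def)
    moreover have "(\<Prod>i\<in>I. g i (C i)) = g j (C j) * (g k (C k) * (\<Prod>i\<in>I-{j}-{k}. g i (C i)))"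
      by (rule r)
    moreover have "(\<Prod>i\<in>I. p i (C i)) = p j (C j) * (p k (C k) * (\<Prod>i\<in>I-{j}-{k}. p i (C i)))"
      by (rule r)
    ultimately show ?thesis using assms(6) by (simp add: g_def)
  qed
  then have "(\<Sum>C\<in>PiE I B. (\<Prod>i\<in>I. p i (C i)) * (f (C j) * h (C k))) = (\<Prod>i\<in>I. \<Sum>b\<in>B i. g i b)"
    using PiE_prod_sum[of I B g] assms by simp
  also have "\<dots> = (\<Sum>b\<in>B j. g j b) * ((\<Sum>b\<in>B k. g k b) * (\<Prod>i\<in>I-{j}-{k}. \<Sum>b\<in>B i. g i b))"
    by (rule r)
  also have "(\<Prod>i\<in>I-{j}-{k}. \<Sum>b\<in>B i. g i b) = 1"
    using assms(3) by (intro prod.neutral) (auto simp: g_def)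
  finally show ?thesis using assms(6) by (simp add: g_def)
qed


lemma expect_abs_le_sqrt:
  fixes cp X :: "'c \<Rightarrow> real"
  assumes "finite K" "\<And>c. c \<in> K \<Longrightarrow> cp c \<ge> 0" "(\<Sum>c\<in>K. cp c) = 1"
  shows "(\<Sum>c\<in>K. cp c * \<bar>X c\<bar>) \<le> sqrt (\<Sum>c\<in>K. cp c * (X c)\<^sup>2)"
proof -
  define \<mu> where "\<mu> = (\<Sum>c\<in>K. cp c * \<bar>X c\<bar>)"
  have "0 \<le> (\<Sum>c\<in>K. cp c * (\<bar>X c\<bar> - \<mu>)\<^sup>2)"
    using assms by (intro sum_nonneg) auto
  also have "\<dots> = (\<Sum>c\<in>K. cp c * (X c)\<^sup>2) - 2 * \<mu> * (\<Sum>c\<in>K. cp c * \<bar>X c\<bar>) + \<mu>\<^sup>2 * (\<Sum>c\<in>K. cp c)"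
    by (simp add: power2_eq_square algebra_simps sum.distrib sum_subtractf sum_distrib_left sum_distrib_right)
  finally have "\<mu>\<^sup>2 \<le> (\<Sum>c\<in>K. cp c * (X c)\<^sup>2)" using assms(3) by (simp add: \<mu>_def power2_eq_square)
  then show ?thesis unfolding \<mu>_def by (simp add: real_le_rsqrt)
qed

lemma sum_sq_expand:
  fixes p y :: "'b \<Rightarrow> real"
  shows "(\<Sum>b\<in>B. p b * (y b - c)\<^sup>2) = (\<Sum>b\<in>B. p b * (y b)\<^sup>2) - 2 * c * (\<Sum>b\<in>B. p b * y b) + c\<^sup>2 * (\<Sum>b\<in>B. p b)"
proof -
  have "(\<Sum>b\<in>B. p b * (y b - c)\<^sup>2) = (\<Sum>b\<in>B. p b * (y b)\<^sup>2 - (2 * c) * (p b * y b) + c\<^sup>2 * p b)"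
    by (intro sum.cong refl) (simp add: power2_eq_square algebra_simps)
  also have "\<dots> = (\<Sum>b\<in>B. p b * (y b)\<^sup>2) - 2 * c * (\<Sum>b\<in>B. p b * y b) + c\<^sup>2 * (\<Sum>b\<in>B. p b)"
    by (simp add: sum.distrib sum_subtractf sum_distrib_left)
  finally show ?thesis .
qed

lemma PiE_var:
  fixes p :: "'i \<Rightarrow> 'b \<Rightarrow> real" and y :: "'i \<Rightarrow> 'b \<Rightarrow> real"
  assumes "finite I" "\<And>i. i \<in> I \<Longrightarrow> finite (B i)" "\<And>i. i \<in> I \<Longrightarrow> (\<Sum>b\<in>B i. p i b) = 1"
    and "\<And>i b. i \<in> I \<Longrightarrow> b \<in> B i \<Longrightarrow> p i b \<ge> 0"
  defines "m i \<equiv> (\<Sum>b\<in>B i. p i b * y i b)"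
  shows "(\<Sum>C\<in>PiE I B. (\<Prod>i\<in>I. p i (C i)) * (\<Sum>i\<in>I. y i (C i) - m i)\<^sup>2)
      \<le> (\<Sum>i\<in>I. \<Sum>b\<in>B i. p i b * (y i b)\<^sup>2)"
proof -
  let ?P = "\<lambda>C. (\<Prod>i\<in>I. p i (C i))"
  have "(\<Sum>C\<in>PiE I B. ?P C * (\<Sum>i\<in>I. y i (C i) - m i)\<^sup>2)
     = (\<Sum>C\<in>PiE I B. \<Sum>i\<in>I. \<Sum>j\<in>I. ?P C * ((y i (C i) - m i) * (y j (C j) - m j)))"
  proof (intro sum.cong refl)
    fix C
    have "(\<Sum>i\<in>I. y i (C i) - m i)\<^sup>2 = (\<Sum>i\<in>I. \<Sum>j\<in>I. (y i (C i) - m i) * (y j (C j) - m j))"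
      unfolding power2_eq_square by (rule sum_product)
    then show "?P C * (\<Sum>i\<in>I. y i (C i) - m i)\<^sup>2 = (\<Sum>i\<in>I. \<Sum>j\<in>I. ?P C * ((y i (C i) - m i) * (y j (C j) - m j)))"
      by (simp add: sum_distrib_left)
  qed
  also have "\<dots> = (\<Sum>i\<in>I. \<Sum>j\<in>I. \<Sum>C\<in>PiE I B. ?P C * ((y i (C i) - m i) * (y j (C j) - m j)))"
    by (simp add: sum.swap[of _ "PiE I B"] sum.swap[of _ "PiE I B" I])
  also have "\<dots> \<le> (\<Sum>i\<in>I. \<Sum>j\<in>I. if i = j then (\<Sum>b\<in>B i. p i b * (y i b)\<^sup>2) else 0)"
  proof (intro sum_mono)
    fix i j assume ij: "i \<in> I" "j \<in> I"
    have cen: "(\<Sum>b\<in>B k. p k b * (y k b - m k)) = 0" if "k \<in> I" for k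
      using assms(3)[OF that] by (simp add: m_def algebra_simps sum_subtractf sum_distrib_right[symmetric])
    show "(\<Sum>C\<in>PiE I B. ?P C * ((y i (C i) - m i) * (y j (C j) - m j)))
        \<le> (if i = j then (\<Sum>b\<in>B i. p i b * (y i b)\<^sup>2) else 0)"
    proof (cases "i = j")
      case True
      have "(\<Sum>C\<in>PiE I B. ?P C * ((y i (C i) - m i) * (y j (C j) - m j)))
          = (\<Sum>b\<in>B i. p i b * (y i b - m i)\<^sup>2)"
        using PiE_expect1[OF assms(1-3) ij(1), where f="\<lambda>b. (y i b - m i)\<^sup>2"] True
        by (simp add: power2_eq_square)
      also have "\<dots> = (\<Sum>b\<in>B i. p i b * (y i b)\<^sup>2) - 2 * m i * m i + (m i)\<^sup>2 * (\<Sum>b\<in>B i. p i b)"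
        by (simp add: sum_sq_expand m_def)
      also have "\<dots> \<le> (\<Sum>b\<in>B i. p i b * (y i b)\<^sup>2)"
        using assms(3)[OF ij(1)] by (simp add: power2_eq_square)
      finally show ?thesis using True by simp
    next
      case False
      have "(\<Sum>C\<in>PiE I B. ?P C * ((y i (C i) - m i) * (y j (C j) - m j)))
          = (\<Sum>b\<in>B i. p i b * (y i b - m i)) * (\<Sum>b\<in>B j. p j b * (y j b - m j))"
        by (rule PiE_expect2[OF assms(1-3) ij False])
      then show ?thesis using False cen ij by simp
    qed
  qed
  also have "\<dots> = (\<Sum>i\<in>I. \<Sum>b\<in>B i. p i b * (y i b)\<^sup>2)"
    using assms(1) by (simp add: sum.delta)
  finally show ?thesis .
qed


lemma pmf_nonneg: "is_pmf p \<Longrightarrow> 0 \<le> p x" by (simp add: is_pmf_def)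
lemma pmf_sum: "is_pmf p \<Longrightarrow> (\<Sum>x\<in>UNIV. p x) = 1" by (simp add: is_pmf_def)

lemma sqrt_prod_lessThan: fixes n :: nat shows "sqrt (\<Prod>t<n. f t) = (\<Prod>t<n. sqrt (f t))"
  by (induction n) (simp_all add: real_sqrt_mult)

locale setting =
  fixes PW :: "'w::finite \<Rightarrow> real"
    and PUW :: "'w \<Rightarrow> 'u::finite \<Rightarrow> real"
    and PV :: "'w \<Rightarrow> 'u \<Rightarrow> 'v::finite \<Rightarrow> real"
  assumes pW: "is_pmf PW" and pU: "\<And>w. is_pmf (PUW w)" and pV: "\<And>w u. is_pmf (PV w u)"
begin

abbreviation "J \<equiv> joint PW PUW PV"
abbreviation "Ph \<equiv> PhiV PW PUW PV"
abbreviation "Z \<equiv> Zfun PW PUW PV"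

lemma nn: "0 \<le> PW w" "0 \<le> PUW w u" "0 \<le> PV w u v"
  using pmf_nonneg[OF pW] pmf_nonneg[OF pU] pmf_nonneg[OF pV] by auto

lemma J_nonneg: "0 \<le> J w u v"
  unfolding joint_def using nn by simp

lemma J_le_Ph: "J w u v \<le> Ph v"
proof -
  have "J w u v \<le> (\<Sum>u\<in>UNIV. J w u v)"
    by (rule member_le_sum) (auto simp: J_nonneg)
  also have "\<dots> \<le> (\<Sum>w\<in>UNIV. \<Sum>u\<in>UNIV. J w u v)"
    by (rule member_le_sum[where f="\<lambda>w. \<Sum>u\<in>UNIV. J w u v"]) (auto intro!: sum_nonneg simp: J_nonneg)
  finally show ?thesis by (simp add: PhiV_def)
qed

lemma Ph_nonneg: "0 \<le> Ph v"
  unfolding PhiV_def by (auto intro!: sum_nonneg simp: J_nonneg)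

lemma Z_nonneg: "0 \<le> Z w u v"
  unfolding Zfun_def using nn Ph_nonneg by simp

lemma J_pos:
  assumes "J w u v \<noteq> 0"
  shows "0 < Ph v" "0 < Z w u v" "PW w * PV w u v = Ph v * Z w u v" "0 < PW w" "0 < PUW w u" "0 < PV w u v"
proof -
  have a: "0 < J w u v" using assms J_nonneg[of w u v] by simp
  then show "0 < Ph v" using J_le_Ph[of w u v] by simp
  show "0 < PW w" "0 < PUW w u" "0 < PV w u v" using assms nn(1)[of w] nn(2)[of w u] nn(3)[of w u v] unfolding joint_def
    by (auto simp: less_le)
  then show "0 < Z w u v" using \<open>0 < Ph v\<close> by (simp add: Zfun_def)
  show "PW w * PV w u v = Ph v * Z w u v" using \<open>0 < Ph v\<close> by (simp add: Zfun_def)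
qed

lemma sumJ: "(\<Sum>w\<in>UNIV. \<Sum>u\<in>UNIV. J w u v) = Ph v" by (simp add: PhiV_def)

end

lemma seqs2:
  fixes h :: "nat \<Rightarrow> 'a::finite \<Rightarrow> 'b::finite \<Rightarrow> real"
  shows "(\<Sum>w\<in>seqs n. \<Sum>u\<in>seqs n. \<Prod>t<n. h t (w t) (u t)) = (\<Prod>t<n. \<Sum>a\<in>UNIV. \<Sum>b\<in>UNIV. h t a b)"
proof -
  have "(\<Sum>u\<in>seqs n. \<Prod>t<n. h t (w t) (u t)) = (\<Prod>t<n. \<Sum>b\<in>UNIV. h t (w t) b)" for w :: "nat \<Rightarrow> 'a"
    by (rule seqs_prod_sum)
  then have "(\<Sum>w\<in>seqs n. \<Sum>u\<in>seqs n. \<Prod>t<n. h t (w t) (u t)) = (\<Sum>w\<in>seqs n. \<Prod>t<n. \<Sum>b\<in>UNIV. h t (w t) b)"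
    by simp
  also have "\<dots> = (\<Prod>t<n. \<Sum>a\<in>UNIV. \<Sum>b\<in>UNIV. h t a b)"
    by (rule seqs_prod_sum)
  finally show ?thesis .
qed

lemma seqs3:
  fixes h :: "'a::finite \<Rightarrow> 'b::finite \<Rightarrow> 'c::finite \<Rightarrow> real"
  shows "(\<Sum>v\<in>seqs n. \<Sum>w\<in>seqs n. \<Sum>u\<in>seqs n. \<Prod>t<n. h (w t) (u t) (v t))
        = (\<Sum>v\<in>UNIV. \<Sum>w\<in>UNIV. \<Sum>u\<in>UNIV. h w u v) ^ n"
proof -
  have "(\<Sum>v\<in>seqs n. \<Sum>w\<in>seqs n. \<Sum>u\<in>seqs n. \<Prod>t<n. h (w t) (u t) (v t))
      = (\<Sum>v\<in>seqs n. \<Prod>t<n. \<Sum>w\<in>UNIV. \<Sum>u\<in>UNIV. h w u (v t))"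
    by (intro sum.cong refl) (rule seqs2[where h="\<lambda>t a b. h a b (_ t)"])
  also have "\<dots> = (\<Prod>t<n. \<Sum>v\<in>UNIV. \<Sum>w\<in>UNIV. \<Sum>u\<in>UNIV. h w u v)"
    by (rule seqs_prod_sum)
  finally show ?thesis by simp
qed

context setting begin

definition "Jn n w u v = (\<Prod>t<n. J (w t) (u t) (v t))"
definition "qn n w u = (\<Prod>t<n. PUW (w t) (u t))"
definition "Xn n w u v = (\<Prod>t<n. PW (w t) * PV (w t) (u t) (v t))"
definition "Zn n w u v = (\<Prod>t<n. Z (w t) (u t) (v t))"

lemma qX: "qn n w u * Xn n w u v = Jn n w u v"
  unfolding qn_def Xn_def Jn_def joint_def prod.distrib[symmetric]
  by (intro prod.cong refl) (simp add: ac_simps)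

lemma qsum: "(\<Sum>u\<in>seqs n. qn n w u) = 1"
  unfolding qn_def by (subst seqs_prod_sum[where f="\<lambda>t a. PUW (w t) a"]) (simp add: pmf_sum[OF pU])

lemma Jsum: "(\<Sum>w\<in>seqs n. \<Sum>u\<in>seqs n. Jn n w u v) = Q_out PW PUW PV n v"
  unfolding Jn_def Q_out_def by (subst seqs2[where h="\<lambda>t a b. J a b (v t)"]) (simp add: PhiV_def)

lemma qn_nonneg: "0 \<le> qn n w u" unfolding qn_def by (auto intro!: prod_nonneg simp: nn)
lemma Xn_nonneg: "0 \<le> Xn n w u v" unfolding Xn_def by (auto intro!: prod_nonneg simp: nn)
lemma Jn_nonneg: "0 \<le> Jn n w u v" unfolding Jn_def by (auto intro!: prod_nonneg simp: J_nonneg)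
lemma Zn_nonneg: "0 \<le> Zn n w u v" unfolding Zn_def by (auto intro!: prod_nonneg simp: Z_nonneg)
lemma Qn_nonneg: "0 \<le> Q_out PW PUW PV n v" unfolding Q_out_def by (auto intro!: prod_nonneg simp: Ph_nonneg)

lemma Jn_pos:
  assumes "Jn n w u v \<noteq> 0"
  shows "Xn n w u v = Q_out PW PUW PV n v * Zn n w u v" "0 < Zn n w u v"
proof -
  have nz: "J (w t) (u t) (v t) \<noteq> 0" if "t < n" for t
    using assms that unfolding Jn_def by auto
  have "Xn n w u v = (\<Prod>t<n. Ph (v t) * Z (w t) (u t) (v t))"
    unfolding Xn_def by (intro prod.cong refl) (use J_pos(3)[OF nz] in auto)
  then show "Xn n w u v = Q_out PW PUW PV n v * Zn n w u v"
    by (simp add: prod.distrib Q_out_def Zn_def)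
  show "0 < Zn n w u v" unfolding Zn_def by (intro prod_pos) (use J_pos(2)[OF nz] in auto)
qed

lemma Zn_powr: "Zn n w u v powr b = (\<Prod>t<n. Z (w t) (u t) (v t) powr b)"
  unfolding Zn_def using Z_nonneg by (simp add: prod_powr_distrib)

lemma JZ_prod: "Jn n w u v * Zn n w u v powr b = (\<Prod>t<n. J (w t) (u t) (v t) * Z (w t) (u t) (v t) powr b)"
  unfolding Zn_powr Jn_def prod.distrib by simp

lemma SumZb: "(\<Sum>v\<in>seqs n. \<Sum>w\<in>seqs n. \<Sum>u\<in>seqs n. Jn n w u v * Zn n w u v powr b) = (EZpow PW PUW PV b) ^ n"
proof -
  have "(\<Sum>v\<in>seqs n. \<Sum>w\<in>seqs n. \<Sum>u\<in>seqs n. Jn n w u v * Zn n w u v powr b)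
     = (\<Sum>v\<in>UNIV. \<Sum>w\<in>UNIV. \<Sum>u\<in>UNIV. J w u v * Z w u v powr b) ^ n"
    unfolding JZ_prod by (rule seqs3[where h="\<lambda>w u v. J w u v * Z w u v powr b"])
  also have "(\<Sum>v\<in>UNIV. \<Sum>w\<in>UNIV. \<Sum>u\<in>UNIV. J w u v * Z w u v powr b) = EZpow PW PUW PV b"
    unfolding EZpow_def
    by (subst sum.swap) (simp add: sum.swap[of _ "UNIV::'v set" "UNIV::'u set"])
  finally show ?thesis .
qed

definition "gS c a = Ph a * (\<Sum>w\<in>UNIV. \<Sum>u\<in>UNIV. J w u a * Z w u a powr c)"

lemma gS_sqrt: "(\<Sum>a\<in>UNIV. sqrt (gS c a)) = ESqrtCond PW PUW PV c"
  unfolding ESqrtCond_def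
proof (intro sum.cong refl)
  fix a
  let ?S = "(\<Sum>w\<in>UNIV. \<Sum>u\<in>UNIV. J w u a * Z w u a powr c)"
  show "sqrt (gS c a) = Ph a * sqrt (\<Sum>w\<in>UNIV. \<Sum>u\<in>UNIV. J w u a / Ph a * Z w u a powr c)"
  proof (cases "Ph a = 0")
    case True then show ?thesis by (simp add: gS_def)
  next
    case False
    then have p: "0 < Ph a" using Ph_nonneg[of a] by simp
    have "(\<Sum>w\<in>UNIV. \<Sum>u\<in>UNIV. J w u a / Ph a * Z w u a powr c) = ?S / Ph a"
      by (simp add: sum_divide_distrib)
    moreover have "Ph a * sqrt (?S / Ph a) = sqrt (Ph a * ?S)"
    proof -
      have "Ph a * sqrt (?S / Ph a) = sqrt ((Ph a)\<^sup>2) * sqrt (?S / Ph a)" using p by simp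
      also have "\<dots> = sqrt ((Ph a)\<^sup>2 * (?S / Ph a))" by (simp only: real_sqrt_mult)
      also have "(Ph a)\<^sup>2 * (?S / Ph a) = Ph a * ?S" using p by (simp add: power2_eq_square)
      finally show ?thesis .
    qed
    ultimately show ?thesis by (simp add: gS_def)
  qed
qed

lemma SqrtSum: "(\<Sum>v\<in>seqs n. sqrt (Q_out PW PUW PV n v * (\<Sum>w\<in>seqs n. \<Sum>u\<in>seqs n. Jn n w u v * Zn n w u v powr c)))
   = (ESqrtCond PW PUW PV c) ^ n"
proof -
  have e: "Q_out PW PUW PV n v * (\<Sum>w\<in>seqs n. \<Sum>u\<in>seqs n. Jn n w u v * Zn n w u v powr c) = (\<Prod>t<n. gS c (v t))" for v
  proof -
    have "(\<Sum>w\<in>seqs n. \<Sum>u\<in>seqs n. Jn n w u v * Zn n w u v powr c)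
        = (\<Prod>t<n. \<Sum>a\<in>UNIV. \<Sum>b\<in>UNIV. J a b (v t) * Z a b (v t) powr c)"
      unfolding JZ_prod by (rule seqs2[where h="\<lambda>t a b. J a b (v t) * Z a b (v t) powr c"])
    then show ?thesis by (simp add: Q_out_def gS_def prod.distrib)
  qed
  have "(\<Sum>v\<in>seqs n. sqrt (Q_out PW PUW PV n v * (\<Sum>w\<in>seqs n. \<Sum>u\<in>seqs n. Jn n w u v * Zn n w u v powr c)))
      = (\<Sum>v\<in>seqs n. \<Prod>t<n. sqrt (gS c (v t)))"
    unfolding e sqrt_prod_lessThan by simp
  also have "\<dots> = (\<Prod>t<n. \<Sum>a\<in>UNIV. sqrt (gS c a))"
    by (rule seqs_prod_sum)
  also have "\<dots> = (ESqrtCond PW PUW PV c) ^ n"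
    by (simp add: gS_sqrt)
  finally show ?thesis .
qed

end

context setting begin

lemma step4:
  assumes "0 < \<tau>" "0 \<le> b'"
  shows "qn n w u * (Xn n w u v * (if Zn n w u v \<le> \<tau> then 1 else 0))\<^sup>2
      \<le> \<tau> powr b' * (Q_out PW PUW PV n v * (Jn n w u v * Zn n w u v powr (1 - b')))"
proof (cases "Jn n w u v = 0")
  case True
  then have "qn n w u * Xn n w u v = 0" by (simp add: qX)
  then have "qn n w u * (Xn n w u v * (if Zn n w u v \<le> \<tau> then 1 else 0))\<^sup>2 = 0"
    by (simp add: power2_eq_square)
  moreover have "0 \<le> \<tau> powr b' * (Q_out PW PUW PV n v * (Jn n w u v * Zn n w u v powr (1 - b')))"
    using Qn_nonneg Jn_nonneg Zn_nonneg by (intro mult_nonneg_nonneg) auto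
  ultimately show ?thesis by linarith
next
  case False
  note X = Jn_pos[OF False]
  let ?Z = "Zn n w u v" and ?Q = "Q_out PW PUW PV n v" and ?J = "Jn n w u v"
  have eq: "qn n w u * (Xn n w u v * (if ?Z \<le> \<tau> then 1 else 0))\<^sup>2 = (if ?Z \<le> \<tau> then ?J * ?Q * ?Z else 0)"
    using qX[of n w u v] X(1) by (simp add: power2_eq_square algebra_simps)
  show ?thesis
  proof (cases "?Z \<le> \<tau>")
    case True
    have "?Z = ?Z powr (1 - b') * ?Z powr b'" using X(2) by (simp add: powr_add[symmetric])
    also have "\<dots> \<le> ?Z powr (1 - b') * \<tau> powr b'"
      using True X(2) assms by (intro mult_left_mono powr_mono2) auto
    finally have "?J * ?Q * ?Z \<le> ?J * ?Q * (?Z powr (1 - b') * \<tau> powr b')"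
      using Jn_nonneg Qn_nonneg by (intro mult_left_mono mult_nonneg_nonneg) auto
    then show ?thesis using eq True by (simp add: ac_simps)
  next
    case False
    moreover have "0 \<le> \<tau> powr b' * (?Q * (?J * ?Z powr (1 - b')))"
      using Qn_nonneg Jn_nonneg by (intro mult_nonneg_nonneg) auto
    ultimately show ?thesis using eq by simp
  qed
qed

lemma step5:
  assumes "0 < \<tau>" "0 \<le> b"
  shows "Jn n w u v * (if Zn n w u v \<le> \<tau> then 0 else 1) \<le> \<tau> powr (- b) * (Jn n w u v * Zn n w u v powr b)"
proof (cases "Jn n w u v = 0 \<or> Zn n w u v \<le> \<tau>")
  case True
  then show ?thesis using Jn_nonneg[of n w u v] by auto
next
  case False
  let ?Z = "Zn n w u v"
  have "\<tau> powr b \<le> ?Z powr b" using False assms by (intro powr_mono2) auto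
  then have "1 \<le> \<tau> powr (- b) * ?Z powr b" using assms by (simp add: powr_minus field_simps)
  then have "Jn n w u v * 1 \<le> Jn n w u v * (\<tau> powr (- b) * ?Z powr b)"
    using Jn_nonneg by (intro mult_left_mono) auto
  then show ?thesis using False by (simp add: ac_simps)
qed

lemma tv_tau:
  assumes tau: "0 < \<tau>" and b: "0 \<le> b" and b': "0 \<le> b'"
  shows "expected_tv PW PUW PV n \<le> 1/2 * (\<tau> powr (b'/2) * (ESqrtCond PW PUW PV (1-b'))^n)
          + \<tau> powr (-b) * (EZpow PW PUW PV b)^n"
proof -
  let ?S = "seqs n :: (nat \<Rightarrow> 'w) set"
  let ?U = "seqs n :: (nat \<Rightarrow> 'u) set"
  let ?V = "seqs n :: (nat \<Rightarrow> 'v) set"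
  let ?cb = "codebooks n :: ((nat \<Rightarrow> 'w) \<Rightarrow> (nat \<Rightarrow> 'u)) set"
  define Q where "Q v = Q_out PW PUW PV n v" for v
  define y where "y v w u = Xn n w u v * (if Zn n w u v \<le> \<tau> then 1 else 0)" for v w u
  define r where "r v w u = Xn n w u v * (if Zn n w u v \<le> \<tau> then 0 else 1)" for v w u
  define m where "m v w = (\<Sum>u\<in>?U. qn n w u * y v w u)" for v w
  define mr where "mr v w = (\<Sum>u\<in>?U. qn n w u * r v w u)" for v w
  define cp where "cp C = (\<Prod>w\<in>?S. qn n w (C w))" for C :: "(nat \<Rightarrow> 'w) \<Rightarrow> (nat \<Rightarrow> 'u)"
  have cb: "?cb = PiE ?S (\<lambda>_. ?U)" by (simp add: codebooks_def)
  have cp_def': "codebook_prob PUW n C = cp C" for C by (simp add: codebook_prob_def cp_def qn_def)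
  have cp_nn: "0 \<le> cp C" for C unfolding cp_def by (auto intro!: prod_nonneg simp: qn_nonneg)
  have cp_sum: "(\<Sum>C\<in>?cb. cp C) = 1"
    unfolding cb cp_def by (rule PiE_total) (auto simp: qsum)
  have r_nn: "0 \<le> r v w u" for v w u by (simp add: r_def Xn_nonneg)
  have mr_nn: "0 \<le> mr v w" for v w unfolding mr_def by (auto intro!: sum_nonneg simp: qn_nonneg r_nn)
  have Pout: "P_out PW PV n C v = (\<Sum>w\<in>?S. y v w (C w) + r v w (C w))" for C v
    unfolding P_out_def y_def r_def Xn_def by (intro sum.cong refl) simp
  have Qeq: "Q v = (\<Sum>w\<in>?S. m v w + mr v w)" for v
  proof -
    have "Q v = (\<Sum>w\<in>?S. \<Sum>u\<in>?U. qn n w u * Xn n w u v)" by (simp add: Q_def Jsum[symmetric] qX)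
    also have "\<dots> = (\<Sum>w\<in>?S. m v w + mr v w)"
      unfolding m_def mr_def sum.distrib[symmetric]
      by (intro sum.cong refl) (simp add: y_def r_def)
    finally show ?thesis .
  qed
  have s1: "\<bar>P_out PW PV n C v - Q v\<bar> \<le> \<bar>\<Sum>w\<in>?S. y v w (C w) - m v w\<bar> + (\<Sum>w\<in>?S. r v w (C w)) + (\<Sum>w\<in>?S. mr v w)"
    for C v
  proof -
    have "P_out PW PV n C v - Q v = (\<Sum>w\<in>?S. y v w (C w) - m v w) + (\<Sum>w\<in>?S. r v w (C w)) - (\<Sum>w\<in>?S. mr v w)"
      unfolding Pout Qeq by (simp add: sum.distrib sum_subtractf)
    moreover have "0 \<le> (\<Sum>w\<in>?S. r v w (C w))" "0 \<le> (\<Sum>w\<in>?S. mr v w)"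
      by (auto intro!: sum_nonneg simp: r_nn mr_nn)
    ultimately show ?thesis by linarith
  qed
  have Er: "(\<Sum>C\<in>?cb. cp C * (\<Sum>w\<in>?S. r v w (C w))) = (\<Sum>w\<in>?S. mr v w)" for v
  proof -
    have "(\<Sum>C\<in>?cb. cp C * (\<Sum>w\<in>?S. r v w (C w))) = (\<Sum>w\<in>?S. \<Sum>C\<in>?cb. cp C * r v w (C w))"
      by (simp add: sum_distrib_left sum.swap[of _ ?cb])
    also have "\<dots> = (\<Sum>w\<in>?S. mr v w)"
      unfolding cb cp_def mr_def
      by (intro sum.cong refl PiE_expect1) (auto simp: qsum)
    finally show ?thesis .
  qed
  have Ey: "(\<Sum>C\<in>?cb. cp C * \<bar>\<Sum>w\<in>?S. y v w (C w) - m v w\<bar>)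
      \<le> \<tau> powr (b'/2) * sqrt (Q v * (\<Sum>w\<in>?S. \<Sum>u\<in>?U. Jn n w u v * Zn n w u v powr (1 - b')))" for v
  proof -
    have "(\<Sum>C\<in>?cb. cp C * \<bar>\<Sum>w\<in>?S. y v w (C w) - m v w\<bar>)
        \<le> sqrt (\<Sum>C\<in>?cb. cp C * (\<Sum>w\<in>?S. y v w (C w) - m v w)\<^sup>2)"
      by (rule expect_abs_le_sqrt) (use cp_nn cp_sum in \<open>auto simp: codebooks_def seqs_def intro!: finite_PiE\<close>)
    also have "(\<Sum>C\<in>?cb. cp C * (\<Sum>w\<in>?S. y v w (C w) - m v w)\<^sup>2) \<le> (\<Sum>w\<in>?S. \<Sum>u\<in>?U. qn n w u * (y v w u)\<^sup>2)"
      unfolding cb cp_def m_def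
      by (rule PiE_var) (auto simp: qsum qn_nonneg)
    also have "\<dots> \<le> (\<Sum>w\<in>?S. \<Sum>u\<in>?U. \<tau> powr b' * (Q v * (Jn n w u v * Zn n w u v powr (1 - b'))))"
      unfolding y_def Q_def by (intro sum_mono step4 tau b')
    also have "\<dots> = \<tau> powr b' * (Q v * (\<Sum>w\<in>?S. \<Sum>u\<in>?U. Jn n w u v * Zn n w u v powr (1 - b')))"
      by (simp add: sum_distrib_left)
    finally have "(\<Sum>C\<in>?cb. cp C * \<bar>\<Sum>w\<in>?S. y v w (C w) - m v w\<bar>)
        \<le> sqrt (\<tau> powr b' * (Q v * (\<Sum>w\<in>?S. \<Sum>u\<in>?U. Jn n w u v * Zn n w u v powr (1 - b'))))"
      by (simp add: real_sqrt_le_iff)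
    also have "sqrt (\<tau> powr b') = \<tau> powr (b'/2)"
      using tau by (simp add: powr_half_sqrt[symmetric] powr_powr)
    then have "sqrt (\<tau> powr b' * (Q v * (\<Sum>w\<in>?S. \<Sum>u\<in>?U. Jn n w u v * Zn n w u v powr (1 - b'))))
      = \<tau> powr (b'/2) * sqrt (Q v * (\<Sum>w\<in>?S. \<Sum>u\<in>?U. Jn n w u v * Zn n w u v powr (1 - b')))"
      by (simp add: real_sqrt_mult)
    finally show ?thesis .
  qed
  have Emr: "(\<Sum>w\<in>?S. mr v w) \<le> \<tau> powr (-b) * (\<Sum>w\<in>?S. \<Sum>u\<in>?U. Jn n w u v * Zn n w u v powr b)" for v
  proof -
    have "(\<Sum>w\<in>?S. mr v w) = (\<Sum>w\<in>?S. \<Sum>u\<in>?U. Jn n w u v * (if Zn n w u v \<le> \<tau> then 0 else 1))"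
      unfolding mr_def r_def by (intro sum.cong refl) (simp add: qX[symmetric] ac_simps)
    also have "\<dots> \<le> (\<Sum>w\<in>?S. \<Sum>u\<in>?U. \<tau> powr (-b) * (Jn n w u v * Zn n w u v powr b))"
      by (intro sum_mono step5 tau b)
    finally show ?thesis by (simp add: sum_distrib_left)
  qed
  have per_v: "(\<Sum>C\<in>?cb. cp C * \<bar>P_out PW PV n C v - Q v\<bar>)
     \<le> \<tau> powr (b'/2) * sqrt (Q v * (\<Sum>w\<in>?S. \<Sum>u\<in>?U. Jn n w u v * Zn n w u v powr (1 - b')))
       + 2 * (\<tau> powr (-b) * (\<Sum>w\<in>?S. \<Sum>u\<in>?U. Jn n w u v * Zn n w u v powr b))" for v
  proof -
    have "(\<Sum>C\<in>?cb. cp C * \<bar>P_out PW PV n C v - Q v\<bar>)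
       \<le> (\<Sum>C\<in>?cb. cp C * (\<bar>\<Sum>w\<in>?S. y v w (C w) - m v w\<bar> + (\<Sum>w\<in>?S. r v w (C w)) + (\<Sum>w\<in>?S. mr v w)))"
      by (intro sum_mono mult_left_mono s1 cp_nn)
    also have "\<dots> = (\<Sum>C\<in>?cb. cp C * \<bar>\<Sum>w\<in>?S. y v w (C w) - m v w\<bar>) + (\<Sum>C\<in>?cb. cp C * (\<Sum>w\<in>?S. r v w (C w)))
        + (\<Sum>C\<in>?cb. cp C) * (\<Sum>w\<in>?S. mr v w)"
      by (simp add: distrib_left sum.distrib sum_distrib_right)
    also have "\<dots> = (\<Sum>C\<in>?cb. cp C * \<bar>\<Sum>w\<in>?S. y v w (C w) - m v w\<bar>) + 2 * (\<Sum>w\<in>?S. mr v w)"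
      by (simp add: Er cp_sum)
    finally show ?thesis using Ey[of v] Emr[of v] by linarith
  qed
  have "expected_tv PW PUW PV n = 1/2 * (\<Sum>v\<in>?V. \<Sum>C\<in>?cb. cp C * \<bar>P_out PW PV n C v - Q v\<bar>)"
    unfolding expected_tv_def tv_dist_def cp_def' Q_def
    by (simp add: sum_distrib_left sum_distrib_right sum.swap[of _ ?cb] ac_simps)
  also have "\<dots> \<le> 1/2 * (\<Sum>v\<in>?V. \<tau> powr (b'/2) * sqrt (Q v * (\<Sum>w\<in>?S. \<Sum>u\<in>?U. Jn n w u v * Zn n w u v powr (1 - b')))
       + 2 * (\<tau> powr (-b) * (\<Sum>w\<in>?S. \<Sum>u\<in>?U. Jn n w u v * Zn n w u v powr b)))"
    by (intro mult_left_mono sum_mono per_v) auto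
  also have "\<dots> = 1/2 * (\<tau> powr (b'/2) * (\<Sum>v\<in>?V. sqrt (Q v * (\<Sum>w\<in>?S. \<Sum>u\<in>?U. Jn n w u v * Zn n w u v powr (1 - b')))))
       + \<tau> powr (-b) * (\<Sum>v\<in>?V. \<Sum>w\<in>?S. \<Sum>u\<in>?U. Jn n w u v * Zn n w u v powr b)"
    by (simp add: sum.distrib sum_distrib_left algebra_simps)
  also have "\<dots> = 1/2 * (\<tau> powr (b'/2) * (ESqrtCond PW PUW PV (1-b'))^n) + \<tau> powr (-b) * (EZpow PW PUW PV b)^n"
    unfolding Q_def SqrtSum SumZb by simp
  finally show ?thesis .
qed

end

context setting begin

lemma sumJ_all: "(\<Sum>w\<in>UNIV. \<Sum>u\<in>UNIV. \<Sum>v\<in>UNIV. J w u v) = 1"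
proof -
  have "(\<Sum>w\<in>UNIV. \<Sum>u\<in>UNIV. \<Sum>v\<in>UNIV. J w u v) = (\<Sum>w\<in>UNIV. \<Sum>u\<in>UNIV. PW w * PUW w u * (\<Sum>v\<in>UNIV. PV w u v))"
    by (simp add: joint_def sum_distrib_left)
  also have "\<dots> = (\<Sum>w\<in>UNIV. PW w * (\<Sum>u\<in>UNIV. PUW w u))"
    by (simp add: pmf_sum[OF pV] sum_distrib_left)
  also have "\<dots> = 1" by (simp add: pmf_sum[OF pU] pmf_sum[OF pW])
  finally show ?thesis .
qed

lemma exists_J_pos: "\<exists>w u v. J w u v \<noteq> 0"
proof (rule ccontr)
  assume "\<not> ?thesis"
  then have "(\<Sum>w\<in>UNIV. \<Sum>u\<in>UNIV. \<Sum>v\<in>UNIV. J w u v) = 0" by simp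
  then show False using sumJ_all by simp
qed

lemma EZpow_pos: "0 < EZpow PW PUW PV b"
proof -
  obtain w0 u0 v0 where nz: "J w0 u0 v0 \<noteq> 0" using exists_J_pos by blast
  have t: "0 \<le> J w u v * Z w u v powr b" for w u v using J_nonneg Z_nonneg by simp
  have "0 < J w0 u0 v0 * Z w0 u0 v0 powr b"
    using J_pos(2)[OF nz] nz J_nonneg[of w0 u0 v0] by simp
  also have "\<dots> \<le> (\<Sum>v\<in>UNIV. J w0 u0 v * Z w0 u0 v powr b)"
    by (rule member_le_sum) (auto simp: t)
  also have "\<dots> \<le> (\<Sum>u\<in>UNIV. \<Sum>v\<in>UNIV. J w0 u v * Z w0 u v powr b)"
    by (rule member_le_sum[where f="\<lambda>u. \<Sum>v\<in>UNIV. J w0 u v * Z w0 u v powr b"]) (auto intro!: sum_nonneg simp: t)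
  also have "\<dots> \<le> EZpow PW PUW PV b"
    unfolding EZpow_def
    by (rule member_le_sum[where f="\<lambda>w. \<Sum>u\<in>UNIV. \<Sum>v\<in>UNIV. J w u v * Z w u v powr b"]) (auto intro!: sum_nonneg simp: t)
  finally show ?thesis .
qed

lemma gS_nonneg: "0 \<le> gS c a"
  unfolding gS_def using Ph_nonneg J_nonneg Z_nonneg by (auto intro!: mult_nonneg_nonneg sum_nonneg)

lemma ESqrt_pos: "0 < ESqrtCond PW PUW PV c"
proof -
  obtain w0 u0 v0 where nz: "J w0 u0 v0 \<noteq> 0" using exists_J_pos by blast
  have t: "0 \<le> J w u v * Z w u v powr c" for w u v using J_nonneg Z_nonneg by simp
  have "0 < J w0 u0 v0 * Z w0 u0 v0 powr c"
    using J_pos(2)[OF nz] nz J_nonneg[of w0 u0 v0] by simp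
  also have "\<dots> \<le> (\<Sum>u\<in>UNIV. J w0 u v0 * Z w0 u v0 powr c)"
    by (rule member_le_sum[where f="\<lambda>u. J w0 u v0 * Z w0 u v0 powr c"]) (auto simp: t)
  also have "\<dots> \<le> (\<Sum>w\<in>UNIV. \<Sum>u\<in>UNIV. J w u v0 * Z w u v0 powr c)"
    by (rule member_le_sum[where f="\<lambda>w. \<Sum>u\<in>UNIV. J w u v0 * Z w u v0 powr c"]) (auto intro!: sum_nonneg simp: t)
  finally have "0 < gS c v0" unfolding gS_def using J_pos(1)[OF nz] by simp
  then have "0 < sqrt (gS c v0)" by simp
  also have "\<dots> \<le> (\<Sum>a\<in>UNIV. sqrt (gS c a))"
    by (rule member_le_sum) (auto simp: gS_nonneg)
  finally show ?thesis by (simp add: gS_sqrt)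
qed

lemma tv_obj:
  assumes b: "0 \<le> b" and b': "0 \<le> b'" and nz: "(b, b') \<noteq> (0, 0)"
  shows "expected_tv PW PUW PV n \<le> 3/2 * 2 powr (- gamma_obj PW PUW PV b b' * real n)"
proof -
  define A where "A = ESqrtCond PW PUW PV (1-b')"
  define B where "B = EZpow PW PUW PV b"
  define D where "D = 2 * b + b'"
  have A: "0 < A" unfolding A_def by (rule ESqrt_pos)
  have B: "0 < B" unfolding B_def by (rule EZpow_pos)
  have D: "0 < D" using b b' nz unfolding D_def by auto
  define \<tau> where "\<tau> = (B / A) powr (2 * real n / D)"
  have tau: "0 < \<tau>" unfolding \<tau>_def using A B by simp
  have lt: "ln \<tau> = 2 * real n / D * (ln B - ln A)"
    unfolding \<tau>_def using A B by (simp add: ln_powr ln_div)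
  define E where "E = real n * (b' / D * ln B + 2 * b / D * ln A)"
  have An: "A ^ n = exp (real n * ln A)" using A by (simp add: exp_of_nat_mult)
  have Bn: "B ^ n = exp (real n * ln B)" using B by (simp add: exp_of_nat_mult)
  have t1: "\<tau> powr (b'/2) * A ^ n = exp E"
  proof -
    have "\<tau> powr (b'/2) * A ^ n = exp (b'/2 * ln \<tau> + real n * ln A)"
      using tau by (simp add: powr_def An exp_add)
    also have "b'/2 * ln \<tau> + real n * ln A = E"
    proof -
      have bb: "b' = D - 2 * b" by (simp add: D_def)
      show ?thesis unfolding lt E_def bb using D by (simp add: field_simps)
    qed
    finally show ?thesis .
  qed
  have t2: "\<tau> powr (-b) * B ^ n = exp E"
  proof -
    have "\<tau> powr (-b) * B ^ n = exp (- b * ln \<tau> + real n * ln B)"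
      using tau by (simp add: powr_def Bn exp_add[symmetric])
    also have "- b * ln \<tau> + real n * ln B = E"
    proof -
      have bb: "b' = D - 2 * b" by (simp add: D_def)
      show ?thesis unfolding lt E_def bb using D by (simp add: field_simps)
    qed
    finally show ?thesis .
  qed
  have t3: "2 powr (- gamma_obj PW PUW PV b b' * real n) = exp E"
  proof -
    have "gamma_obj PW PUW PV b b' = (- b' / D) * (ln B / ln 2) + (- b / D) * (2 * ln A / ln 2)"
      unfolding gamma_obj_def A_def[symmetric] B_def[symmetric] D_def[symmetric] log_def
      using A by (simp add: ln_realpow)
    note g = this
    have "- gamma_obj PW PUW PV b b' * real n * ln 2 = E"
      unfolding E_def g using D by (simp add: field_simps)
    then show ?thesis by (simp add: powr_def)
  qed
  have "expected_tv PW PUW PV n \<le> 1/2 * (\<tau> powr (b'/2) * A ^ n) + \<tau> powr (-b) * B ^ n"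
    unfolding A_def B_def by (rule tv_tau[OF tau b b'])
  also have "\<dots> = 3/2 * 2 powr (- gamma_obj PW PUW PV b b' * real n)"
    unfolding t1 t2 t3 by simp
  finally show ?thesis .
qed

end

context setting begin

lemma EZpow_ge: "J w u v * Z w u v powr b \<le> EZpow PW PUW PV b"
proof -
  have t: "0 \<le> J w u v * Z w u v powr b" for w u v using J_nonneg Z_nonneg by simp
  have "J w u v * Z w u v powr b \<le> (\<Sum>v\<in>UNIV. J w u v * Z w u v powr b)"
    by (rule member_le_sum) (auto simp: t)
  also have "\<dots> \<le> (\<Sum>u\<in>UNIV. \<Sum>v\<in>UNIV. J w u v * Z w u v powr b)"
    by (rule member_le_sum[where f="\<lambda>u. \<Sum>v\<in>UNIV. J w u v * Z w u v powr b"]) (auto intro!: sum_nonneg simp: t)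
  also have "\<dots> \<le> EZpow PW PUW PV b"
    unfolding EZpow_def
    by (rule member_le_sum[where f="\<lambda>w. \<Sum>u\<in>UNIV. \<Sum>v\<in>UNIV. J w u v * Z w u v powr b"]) (auto intro!: sum_nonneg simp: t)
  finally show ?thesis .
qed

lemma ESqrt_ge: "(J w u v)\<^sup>2 * Z w u v powr c \<le> (ESqrtCond PW PUW PV c)\<^sup>2"
proof -
  have t: "0 \<le> J w u v * Z w u v powr c" for w u v using J_nonneg Z_nonneg by simp
  have "J w u v * Z w u v powr c \<le> (\<Sum>u\<in>UNIV. J w u v * Z w u v powr c)"
    by (rule member_le_sum[where f="\<lambda>u. J w u v * Z w u v powr c"]) (auto simp: t)
  also have "\<dots> \<le> (\<Sum>w\<in>UNIV. \<Sum>u\<in>UNIV. J w u v * Z w u v powr c)"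
    by (rule member_le_sum[where f="\<lambda>w. \<Sum>u\<in>UNIV. J w u v * Z w u v powr c"]) (auto intro!: sum_nonneg simp: t)
  finally have "J w u v * (J w u v * Z w u v powr c) \<le> gS c v"
    unfolding gS_def using J_le_Ph[of w u v] J_nonneg[of w u v] t[of w u v]
    by (intro mult_mono) auto
  then have "(J w u v)\<^sup>2 * Z w u v powr c \<le> gS c v" by (simp add: power2_eq_square)
  also have "gS c v = (sqrt (gS c v))\<^sup>2" using gS_nonneg by simp
  also have "sqrt (gS c v) \<le> ESqrtCond PW PUW PV c"
    unfolding gS_sqrt[symmetric] by (rule member_le_sum) (auto simp: gS_nonneg)
  then have "(sqrt (gS c v))\<^sup>2 \<le> (ESqrtCond PW PUW PV c)\<^sup>2"
    by (intro power_mono) (auto simp: gS_nonneg)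
  finally show ?thesis .
qed

lemma obj_bdd: "bdd_above {gamma_obj PW PUW PV b b' | b b'. 0 \<le> b \<and> 0 \<le> b' \<and> (b, b') \<noteq> (0, 0)}"
proof -
  define Sp where "Sp = {x :: 'w \<times> 'u \<times> 'v. J (fst x) (fst (snd x)) (snd (snd x)) \<noteq> 0}"
  define Z' where "Z' x = Z (fst x) (fst (snd x)) (snd (snd x))" for x
  have fin: "finite Sp" by simp
  have ne: "Sp \<noteq> {}" using exists_J_pos unfolding Sp_def by auto
  have "Max (Z' ` Sp) \<in> Z' ` Sp" using fin ne by (intro Max_in) auto
  then obtain xM where xM: "xM \<in> Sp" "Z' xM = Max (Z' ` Sp)" by (metis imageE)
  have "Min (Z' ` Sp) \<in> Z' ` Sp" using fin ne by (intro Min_in) auto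
  then obtain xm where xm: "xm \<in> Sp" "Z' xm = Min (Z' ` Sp)" by (metis imageE)
  obtain w1 u1 v1 where x1: "xM = (w1, u1, v1)" by (cases xM) auto
  obtain w2 u2 v2 where x2: "xm = (w2, u2, v2)" by (cases xm) auto
  have J1: "J w1 u1 v1 \<noteq> 0" using xM x1 Sp_def by auto
  have J2: "J w2 u2 v2 \<noteq> 0" using xm x2 Sp_def by auto
  define M where "M = Z w1 u1 v1"
  define m where "m = Z w2 u2 v2"
  have Mp: "0 < M" using J_pos(2)[OF J1] M_def by simp
  have mp: "0 < m" using J_pos(2)[OF J2] m_def by simp
  have mM: "m \<le> M"
  proof -
    have "Min (Z' ` Sp) \<le> Z' xM" using fin xM(1) by (intro Min_le) auto
    then show ?thesis using xM xm x1 x2 unfolding m_def M_def Z'_def by simp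
  qed
  have J1p: "0 < J w1 u1 v1" using J1 J_nonneg[of w1 u1 v1] by simp
  have J2p: "0 < J w2 u2 v2" using J2 J_nonneg[of w2 u2 v2] by simp
  define K where "K = \<bar>log 2 (J w1 u1 v1)\<bar> + \<bar>log 2 (J w2 u2 v2)\<bar> + \<bar>log 2 m\<bar>"
  show ?thesis unfolding bdd_above_def
  proof (intro exI[of _ K] ballI)
    fix x assume "x \<in> {gamma_obj PW PUW PV b b' | b b'. 0 \<le> b \<and> 0 \<le> b' \<and> (b, b') \<noteq> (0, 0)}"
    then obtain b b' where x: "x = gamma_obj PW PUW PV b b'" and b: "0 \<le> b" and b': "0 \<le> b'"
      and nz: "(b, b') \<noteq> (0, 0)" by blast
    define D where "D = 2 * b + b'"
    have D: "0 < D" using b b' nz unfolding D_def by auto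
    define A2 where "A2 = (ESqrtCond PW PUW PV (1 - b'))\<^sup>2"
    define B where "B = EZpow PW PUW PV b"
    define LB where "LB = log 2 (J w1 u1 v1) + b * log 2 M"
    define LA where "LA = 2 * log 2 (J w2 u2 v2) + (1 - b') * log 2 m"
    have B1: "J w1 u1 v1 * M powr b \<le> B" unfolding B_def M_def by (rule EZpow_ge)
    have p1: "0 < J w1 u1 v1 * M powr b" using J1p Mp by simp
    have "log 2 (J w1 u1 v1 * M powr b) \<le> log 2 B"
      using p1 B1 by (subst log_le_cancel_iff) auto
    moreover have "log 2 (J w1 u1 v1 * M powr b) = LB"
      unfolding LB_def using J1p Mp by (simp add: log_mult log_powr)
    ultimately have hB: "LB \<le> log 2 B" by simp
    have A1: "(J w2 u2 v2)\<^sup>2 * m powr (1 - b') \<le> A2" unfolding A2_def m_def by (rule ESqrt_ge)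
    have p2: "0 < (J w2 u2 v2)\<^sup>2 * m powr (1 - b')" using J2p mp by simp
    have "log 2 ((J w2 u2 v2)\<^sup>2 * m powr (1 - b')) \<le> log 2 A2"
      using p2 A1 by (subst log_le_cancel_iff) auto
    moreover have "log 2 ((J w2 u2 v2)\<^sup>2 * m powr (1 - b')) = LA"
      unfolding LA_def using J2p mp by (simp add: log_mult log_powr log_nat_power)
    ultimately have hA: "LA \<le> log 2 A2" by simp
    have "x = (- b' / D) * log 2 B + (- b / D) * log 2 A2"
      unfolding x gamma_obj_def D_def A2_def B_def by simp
    also have "\<dots> = (- b' * log 2 B - b * log 2 A2) / D" by (simp add: diff_divide_distrib)
    also have "\<dots> \<le> (- b' * LB - b * LA) / D"
    proof -
      have "b' * LB \<le> b' * log 2 B" using hB b' by (rule mult_left_mono)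
      moreover have "b * LA \<le> b * log 2 A2" using hA b by (rule mult_left_mono)
      ultimately have "- b' * log 2 B - b * log 2 A2 \<le> - b' * LB - b * LA" by simp
      then show ?thesis using D by (intro divide_right_mono) auto
    qed
    also have "\<dots> \<le> K"
    proof -
      have lm: "log 2 m \<le> log 2 M" using mM mp by simp
      have e: "- b' * LB - b * LA = (- b' * log 2 (J w1 u1 v1)) + (- (2 * b) * log 2 (J w2 u2 v2)) + (- b * log 2 m)
            - b * b' * (log 2 M - log 2 m)"
        unfolding LB_def LA_def by (simp add: algebra_simps)
      have "0 \<le> b * b' * (log 2 M - log 2 m)" using b b' lm by simp
      moreover have "- b' * log 2 (J w1 u1 v1) \<le> b' * \<bar>log 2 (J w1 u1 v1)\<bar>"
        using b' by (metis abs_ge_minus_self mult_left_mono mult_minus_left mult_minus_right)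
      moreover have "- (2 * b) * log 2 (J w2 u2 v2) \<le> (2 * b) * \<bar>log 2 (J w2 u2 v2)\<bar>"
        using b by (metis abs_ge_minus_self mult_left_mono mult_minus_left mult_minus_right zero_le_mult_iff zero_le_numeral)
      moreover have "- b * log 2 m \<le> b * \<bar>log 2 m\<bar>"
        using b by (metis abs_ge_minus_self mult_left_mono mult_minus_left mult_minus_right)
      moreover have "b' * \<bar>log 2 (J w1 u1 v1)\<bar> \<le> D * \<bar>log 2 (J w1 u1 v1)\<bar>"
        using b by (intro mult_right_mono) (auto simp: D_def)
      moreover have "(2 * b) * \<bar>log 2 (J w2 u2 v2)\<bar> \<le> D * \<bar>log 2 (J w2 u2 v2)\<bar>"
        using b' by (intro mult_right_mono) (auto simp: D_def)
      moreover have "b * \<bar>log 2 m\<bar> \<le> D * \<bar>log 2 m\<bar>"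
        using b b' by (intro mult_right_mono) (auto simp: D_def)
      moreover have "D * K = D * \<bar>log 2 (J w1 u1 v1)\<bar> + D * \<bar>log 2 (J w2 u2 v2)\<bar> + D * \<bar>log 2 m\<bar>"
        by (simp add: K_def distrib_left)
      ultimately have "- b' * LB - b * LA \<le> D * K"
        unfolding e by linarith
      then show ?thesis using D by (simp add: divide_le_eq mult.commute)
    qed
    finally show "x \<le> K" .
  qed
qed

end

context setting begin

lemma Jpow0: "J w u v * Z w u v powr 0 = J w u v"
  by (cases "J w u v = 0") (use J_pos(2)[of w u v] in auto)

lemma sumPh: "(\<Sum>v\<in>UNIV. Ph v) = 1"
proof -
  have "(\<Sum>v\<in>UNIV. Ph v) = (\<Sum>v\<in>UNIV. \<Sum>w\<in>UNIV. \<Sum>u\<in>UNIV. J w u v)" by (simp add: PhiV_def)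
  also have "\<dots> = (\<Sum>w\<in>UNIV. \<Sum>v\<in>UNIV. \<Sum>u\<in>UNIV. J w u v)" by (rule sum.swap)
  also have "\<dots> = (\<Sum>w\<in>UNIV. \<Sum>u\<in>UNIV. \<Sum>v\<in>UNIV. J w u v)" by (intro sum.cong refl sum.swap)
  finally show ?thesis using sumJ_all by simp
qed

lemma EZ0: "EZpow PW PUW PV 0 = 1"
  unfolding EZpow_def Jpow0 by (rule sumJ_all)

lemma ES0: "ESqrtCond PW PUW PV 0 = 1"
proof -
  have "gS 0 a = (Ph a)\<^sup>2" for a unfolding gS_def Jpow0 by (simp add: PhiV_def power2_eq_square)
  then have "(\<Sum>a\<in>UNIV. sqrt (gS 0 a)) = (\<Sum>a\<in>UNIV. Ph a)" using Ph_nonneg by simp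
  then show ?thesis using sumPh gS_sqrt by simp
qed

lemma d_powr: "((\<lambda>x. a powr x) has_real_derivative (1 * ln a * a powr 0)) (at (0::real))"
  using has_real_derivative_const_powr[of "\<lambda>x. x" "\<lambda>_. 1" a, OF DERIV_ident] .

lemma EZ_deriv: "((\<lambda>b. EZpow PW PUW PV b) has_real_derivative
     (\<Sum>w\<in>UNIV. \<Sum>u\<in>UNIV. \<Sum>v\<in>UNIV. J w u v * (1 * ln (Z w u v) * Z w u v powr 0))) (at 0)"
  unfolding EZpow_def
  by (intro DERIV_sum DERIV_cmult d_powr)

lemma L_eq: "(\<Sum>w\<in>UNIV. \<Sum>u\<in>UNIV. \<Sum>v\<in>UNIV. J w u v * (1 * ln (Z w u v) * Z w u v powr 0))
   = ln 2 * (mutinfo PW PUW PV - entropyW PW)"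
proof -
  have t: "J w u v * (1 * ln (Z w u v) * Z w u v powr 0)
      = ln 2 * (J w u v * log 2 (PV w u v / Ph v) + J w u v * log 2 (PW w))" for w u v
  proof (cases "J w u v = 0")
    case True then show ?thesis by simp
  next
    case False
    note p = J_pos[OF False]
    have "Z w u v = PW w * (PV w u v / Ph v)" by (simp add: Zfun_def)
    moreover have "ln (PW w * (PV w u v / Ph v)) = ln (PW w) + ln (PV w u v / Ph v)"
      by (rule ln_mult_pos) (use p in auto)
    ultimately have "ln (Z w u v) = ln (PW w) + ln (PV w u v / Ph v)" by simp
    then show ?thesis using p by (simp add: log_def field_simps)
  qed
  have h: "(\<Sum>w\<in>UNIV. \<Sum>u\<in>UNIV. \<Sum>v\<in>UNIV. J w u v * log 2 (PW w)) = - entropyW PW"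
  proof -
    have "(\<Sum>w\<in>UNIV. \<Sum>u\<in>UNIV. \<Sum>v\<in>UNIV. J w u v * log 2 (PW w))
        = (\<Sum>w\<in>UNIV. PW w * log 2 (PW w) * (\<Sum>u\<in>UNIV. PUW w u * (\<Sum>v\<in>UNIV. PV w u v)))"
      by (simp add: joint_def sum_distrib_left sum_distrib_right ac_simps)
    also have "\<dots> = (\<Sum>w\<in>UNIV. PW w * log 2 (PW w))"
      by (simp add: pmf_sum[OF pV] pmf_sum[OF pU])
    finally show ?thesis by (simp add: entropyW_def)
  qed
  show ?thesis
    unfolding t sum_distrib_left[symmetric] sum.distrib h
    by (simp add: mutinfo_def)
qed

lemma exists_small: assumes "entropyW PW > mutinfo PW PUW PV"
  shows "\<exists>b0>0. EZpow PW PUW PV b0 < 1"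
proof -
  have "ln 2 * (mutinfo PW PUW PV - entropyW PW) < 0" using assms by (simp add: mult_pos_neg)
  then obtain d where d: "d > 0" "\<forall>h>0. h < d \<longrightarrow> EZpow PW PUW PV 0 > EZpow PW PUW PV (0 + h)"
    using DERIV_neg_dec_right[OF EZ_deriv] unfolding L_eq by blast
  then have "EZpow PW PUW PV (d/2) < 1" using EZ0 by (auto dest: spec[of _ "d/2"])
  then show ?thesis using d(1) by (intro exI[of _ "d/2"]) auto
qed

end

theorem mainTheorem17:
  fixes PW :: "'w::finite \<Rightarrow> real"
    and PUW :: "'w \<Rightarrow> 'u::finite \<Rightarrow> real"
    and PV :: "'w \<Rightarrow> 'u \<Rightarrow> 'v::finite \<Rightarrow> real"
  assumes "is_pmf PW"
    and "\<And>w. is_pmf (PUW w)"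
    and "\<And>w u. is_pmf (PV w u)"
    and "entropyW PW > mutinfo PW PUW PV"
  shows "gamma PW PUW PV > 0 \<and>
    (\<forall>n. expected_tv PW PUW PV n \<le> 3/2 * 2 powr (- gamma PW PUW PV * real n))"
proof -
  interpret setting PW PUW PV using assms(1-3) by unfold_locales auto
  define G where "G = {gamma_obj PW PUW PV b b' | b b'. 0 \<le> b \<and> 0 \<le> b' \<and> (b, b') \<noteq> (0, 0)}"
  have bdd: "bdd_above G" unfolding G_def by (rule obj_bdd)
  have gam: "gamma PW PUW PV = Sup G" unfolding G_def gamma_def by simp
  obtain b0 where b0: "b0 > 0" "EZpow PW PUW PV b0 < 1" using exists_small[OF assms(4)] by blast
  define g0 where "g0 = gamma_obj PW PUW PV b0 1"
  have "\<exists>b b'. g0 = gamma_obj PW PUW PV b b' \<and> 0 \<le> b \<and> 0 \<le> b' \<and> (b, b') \<noteq> (0, 0)"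
    using b0 unfolding g0_def by (intro exI[of _ b0] exI[of _ "1::real"]) auto
  then have g0G: "g0 \<in> G" by (simp add: G_def)
  have Bp: "0 < EZpow PW PUW PV b0" by (rule EZpow_pos)
  have "log 2 (EZpow PW PUW PV b0) < 0" using b0 Bp by simp
  then have g0p: "g0 > 0" unfolding g0_def gamma_obj_def using b0 by (simp add: ES0 divide_neg_pos)
  have ne: "G \<noteq> {}" using g0G by auto
  have gpos: "gamma PW PUW PV > 0"
    using cSup_upper[OF g0G bdd] g0p gam by simp
  have tvG: "expected_tv PW PUW PV n \<le> 3/2 * 2 powr (- g * real n)" if "g \<in> G" for g n
    using that tv_obj unfolding G_def by blast
  have "expected_tv PW PUW PV n \<le> 3/2 * 2 powr (- gamma PW PUW PV * real n)" for n
  proof (cases "n = 0")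
    case True
    then show ?thesis using tvG[OF g0G, of n] by simp
  next
    case False
    show ?thesis
    proof (cases "expected_tv PW PUW PV n \<le> 0")
      case True
      moreover have "0 \<le> 3/2 * 2 powr (- gamma PW PUW PV * real n)" by simp
      ultimately show ?thesis by linarith
    next
      case nf: False
      define c where "c = - log 2 (2 * expected_tv PW PUW PV n / 3) / real n"
      have "g \<le> c" if "g \<in> G" for g
      proof -
        have "2 * expected_tv PW PUW PV n / 3 \<le> 2 powr (- g * real n)" using tvG[OF that, of n] by simp
        then have "log 2 (2 * expected_tv PW PUW PV n / 3) \<le> log 2 (2 powr (- g * real n))"
          using nf by (subst log_le_cancel_iff) auto
        then have "log 2 (2 * expected_tv PW PUW PV n / 3) \<le> - g * real n" by simp
        then show ?thesis unfolding c_def using False by (simp add: field_simps)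
      qed
      then have "gamma PW PUW PV \<le> c" unfolding gam by (intro cSup_least ne) auto
      then have "log 2 (2 * expected_tv PW PUW PV n / 3) \<le> - gamma PW PUW PV * real n"
        unfolding c_def using False by (simp add: field_simps)
      then have "2 powr (log 2 (2 * expected_tv PW PUW PV n / 3)) \<le> 2 powr (- gamma PW PUW PV * real n)"
        by simp
      then have "2 * expected_tv PW PUW PV n / 3 \<le> 2 powr (- gamma PW PUW PV * real n)"
        using nf by simp
      then show ?thesis by simp
    qed
  qed
  then show ?thesis using gpos by blast
qed

end
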